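(* Let $(X_t)_{t\ge1}$ be i.i.d. from a non-degenerate distribution $P$ on $[0,1]$ with mean $\mu$, and set $\widehat X_t=t^{-1}(1/2+\sum_{i<t}X_i)$. Fix $\kappa>0$ and $\alpha\in(0,1)$, and let $Z$, $U_t$ and $W_t^{\mathrm{apx}}$ be defined with this choice of $\widehat X_t$. Let $u:=\mathbb{E}_P[\psi_E(|X-\mu|)]$, where $X\sim P$; this $u$ lies in $(0,\infty)$. Set \[ A_t^{\mathrm{apx}}:=\sqrt{\frac{2u\log t}{t}}. \] Then $W_t^{\mathrm{apx}}/A_t^{\mathrm{apx}}\to1$ almost surely. More precisely, $R_t:=W_t^{\mathrm{apx}}/A_t^{\mathrm{apx}}$ satisfies, for $t\ge2$, \[ R_t^2=\frac{2U_t}{t\,u}\left(\frac{\log(1/\alpha)}{\log t}+\frac12+\varepsilon_t\right), \] where $\varepsilon_t\to0$ almost surely.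
   Context: $\psi_E(x)=-\log(1-x)-x$ for $x\in[0,1)$. $\Phi$ is the standard normal CDF and $Z=\Phi(1/\kappa)-\Phi(-1/\kappa)$. Further, $U_t=(2\kappa^2)^{-1}+\sum_{i\le t}\psi_E(|X_i-\widehat X_i|)$ and $W_t^{\mathrm{apx}}=\frac{2}{t}\sqrt{U_t(\ell_{\alpha,t}+\frac12\log(2U_t))}$ with $\ell_{\alpha,t}=\log\big(\frac{\kappa Z/\alpha}{1-\exp(-U_t/4)}\big)$. *)

theory Defs
  imports "HOL-Probability.Probability"
begin

definition psiE :: "real \<Rightarrow> real" where
  "psiE x = - ln (1 - x) - x"

definition Phi :: "real \<Rightarrow> real" where
  "Phi x = measure (density lborel std_normal_density) {..x}"

definition Zk :: "real \<Rightarrow> real" where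
  "Zk \<kappa> = Phi (1/\<kappa>) - Phi (-1/\<kappa>)"

text \<open>Predictor Xhat_t = (1/2 + sum_{1<=i<t} X_i)/t, observations indexed from 1\<close>
definition Xhat :: "(nat \<Rightarrow> 'a \<Rightarrow> real) \<Rightarrow> nat \<Rightarrow> 'a \<Rightarrow> real" where
  "Xhat X t \<omega> = (1/2 + (\<Sum>i\<in>{1..<t}. X i \<omega>)) / real t"

definition Ut :: "real \<Rightarrow> (nat \<Rightarrow> 'a \<Rightarrow> real) \<Rightarrow> nat \<Rightarrow> 'a \<Rightarrow> real" where
  "Ut \<kappa> X t \<omega> = 1 / (2 * \<kappa>^2) + (\<Sum>i\<in>{1..t}. psiE \<bar>X i \<omega> - Xhat X i \<omega>\<bar>)"

definition ell :: "real \<Rightarrow> real \<Rightarrow> (nat \<Rightarrow> 'a \<Rightarrow> real) \<Rightarrow> nat \<Rightarrow> 'a \<Rightarrow> real" where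
  "ell \<kappa> \<alpha> X t \<omega> = ln ((\<kappa> * Zk \<kappa> / \<alpha>) / (1 - exp (- Ut \<kappa> X t \<omega> / 4)))"

definition Wapx :: "real \<Rightarrow> real \<Rightarrow> (nat \<Rightarrow> 'a \<Rightarrow> real) \<Rightarrow> nat \<Rightarrow> 'a \<Rightarrow> real" where
  "Wapx \<kappa> \<alpha> X t \<omega> = (2 / real t) *
     sqrt (Ut \<kappa> X t \<omega> * (ell \<kappa> \<alpha> X t \<omega> + 1/2 * ln (2 * Ut \<kappa> X t \<omega>)))"

definition Aapx :: "real \<Rightarrow> nat \<Rightarrow> real" where
  "Aapx u t = sqrt (2 * u * ln (real t) / real t)"

end

theory Submission
  imports Defs
begin


lemma psiE_nonneg: assumes "0 \<le> y" "y < 1" shows "0 \<le> psiE y"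
proof -
  have "ln (1 - y) \<le> (1 - y) - 1" using assms by (intro ln_le_minus_one) auto
  thus ?thesis by (simp add: psiE_def)
qed

lemma psiE_pos: assumes "0 < y" "y < 1" shows "0 < psiE y"
proof -
  have "1 - y < exp (-y)"
    using assms exp_minus_greater[of y] by simp
  hence "ln (1 - y) < -y" using assms
    by (metis diff_gt_0_iff_gt ln_exp ln_less_cancel_iff exp_gt_zero)
  thus ?thesis by (simp add: psiE_def)
qed

lemma psiE_upper: assumes "0 \<le> y" "y \<le> c" "c < 1" shows "psiE y \<le> 1 / (1 - c)"
proof -
  have "- ln (1 - y) = ln (1 / (1 - y))" using assms by (simp add: ln_div)
  also have "\<dots> \<le> 1 / (1 - y) - 1" using assms by (intro ln_le_minus_one) auto
  also have "\<dots> \<le> 1 / (1 - y)" by simp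
  also have "\<dots> \<le> 1 / (1 - c)" using assms by (intro divide_left_mono) auto
  finally show ?thesis using assms by (simp add: psiE_def)
qed

lemma psiE_lip_aux: assumes "0 \<le> z" "z \<le> y" "y \<le> c" "c < 1"
  shows "\<bar>psiE y - psiE z\<bar> \<le> (1 / (1 - c) + 1) * \<bar>y - z\<bar>"
proof -
  have eq: "psiE y - psiE z = ln ((1 - z) / (1 - y)) - (y - z)"
    using assms by (simp add: psiE_def ln_div)
  have q: "1 \<le> (1 - z) / (1 - y)" using assms by (auto simp: field_simps)
  have l0: "0 \<le> ln ((1 - z) / (1 - y))" using q by simp
  have "ln ((1 - z) / (1 - y)) \<le> (1 - z) / (1 - y) - 1" using q by (intro ln_le_minus_one) auto
  also have "\<dots> = (y - z) / (1 - y)" using assms by (auto simp: field_simps)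
  also have "\<dots> \<le> (y - z) / (1 - c)" using assms by (intro divide_left_mono) auto
  finally have l1: "ln ((1 - z) / (1 - y)) \<le> (y - z) / (1 - c)" .
  have "(y - z) / (1 - c) \<ge> 0" using assms by auto
  have "(1 / (1 - c) + 1) * \<bar>y - z\<bar> = (y - z) / (1 - c) + (y - z)" using assms
    by (simp add: field_simps)
  thus ?thesis unfolding eq using l0 l1 assms \<open>(y - z) / (1 - c) \<ge> 0\<close> by linarith
qed

lemma psiE_lip: assumes "0 \<le> z" "z \<le> c" "0 \<le> y" "y \<le> c" "c < 1"
  shows "\<bar>psiE y - psiE z\<bar> \<le> (1 / (1 - c) + 1) * \<bar>y - z\<bar>"
proof (cases "z \<le> y")
  case True thus ?thesis using psiE_lip_aux assms by blast
next
  case False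
  hence "\<bar>psiE z - psiE y\<bar> \<le> (1 / (1 - c) + 1) * \<bar>z - y\<bar>" using psiE_lip_aux assms by auto
  thus ?thesis by (simp add: abs_minus_commute)
qed

lemma cesaro0:
  fixes a :: "nat \<Rightarrow> real"
  assumes "a \<longlonglongrightarrow> 0"
  shows "(\<lambda>n. (\<Sum>i\<in>{1..n}. a i) / real n) \<longlonglongrightarrow> 0"
proof (rule LIMSEQ_I)
  fix r :: real assume r: "0 < r"
  obtain N where N: "\<And>i. i \<ge> N \<Longrightarrow> \<bar>a i\<bar> < r / 2"
    using LIMSEQ_D[OF assms, of "r/2"] r by auto
  define B where "B = (\<Sum>i\<in>{1..N}. \<bar>a i\<bar>)"
  have B0: "B \<ge> 0" unfolding B_def by (intro sum_nonneg) auto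
  define n0 where "n0 = nat \<lceil>2 * B / r\<rceil> + N + 1"
  have "\<forall>n\<ge>n0. norm ((\<Sum>i\<in>{1..n}. a i) / real n - 0) < r"
  proof (intro allI impI)
    fix n assume n: "n \<ge> n0"
    have nN: "N \<le> n" using n by (simp add: n0_def)
    have npos: "real n > 0" using n by (simp add: n0_def)
    have nB: "2 * B / r < real n"
    proof -
      have "2 * B / r \<le> real (nat \<lceil>2 * B / r\<rceil>)" by linarith
      also have "\<dots> < real n" using n by (simp add: n0_def)
      finally show ?thesis .
    qed
    have split: "{1..n} = {1..N} \<union> {N<..n}" using nN by auto
    have "\<bar>\<Sum>i\<in>{1..n}. a i\<bar> \<le> (\<Sum>i\<in>{1..n}. \<bar>a i\<bar>)" by (rule sum_abs)
    also have "\<dots> = B + (\<Sum>i\<in>{N<..n}. \<bar>a i\<bar>)"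
      unfolding split B_def by (subst sum.union_disjoint) auto
    also have "(\<Sum>i\<in>{N<..n}. \<bar>a i\<bar>) \<le> real (card {N<..n}) * (r / 2)"
      by (intro sum_bounded_above) (use N in \<open>auto intro: less_imp_le\<close>)
    also have "real (card {N<..n}) * (r / 2) \<le> real n * (r / 2)"
      using r by (intro mult_right_mono) auto
    finally have s: "\<bar>\<Sum>i\<in>{1..n}. a i\<bar> \<le> B + real n * (r / 2)" by simp
    have "B < real n * (r / 2)" using nB r by (simp add: field_simps)
    with s have "\<bar>\<Sum>i\<in>{1..n}. a i\<bar> < real n * r" by linarith
    thus "norm ((\<Sum>i\<in>{1..n}. a i) / real n - 0) < r"
      using npos by (simp add: field_simps)
  qed
  thus "\<exists>no. \<forall>n\<ge>no. norm ((\<Sum>i\<in>{1..n}. a i) / real n - 0) < r" by blast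
qed




lemma xhat_lim:
  fixes x :: "nat \<Rightarrow> real"
  assumes "(\<lambda>n. (\<Sum>i\<in>{1..n}. x i) / real n) \<longlonglongrightarrow> \<mu>"
  shows "(\<lambda>t. (1/2 + (\<Sum>i\<in>{1..<t}. x i)) / real t) \<longlonglongrightarrow> \<mu>"
proof -
  have eq: "(1/2 + (\<Sum>i\<in>{1..<Suc n}. x i)) / real (Suc n)
       = (1/2) / real (Suc n) + (\<Sum>i\<in>{1..n}. x i) / real n * (real n / real (Suc n))" for n
  proof (cases "n = 0")
    case True thus ?thesis by simp
  next
    case False
    have e1: "{1..<Suc n} = {1..n}" by auto
    have e2: "(\<Sum>i\<in>{1..n}. x i) / real n * (real n / real (Suc n)) = (\<Sum>i\<in>{1..n}. x i) / real (Suc n)"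
    proof -
      have "real n \<noteq> 0" using False by simp
      thus ?thesis unfolding times_divide_times_eq mult.commute[of _ "real n"]
        by (rule nonzero_mult_divide_mult_cancel_left)
    qed
    show ?thesis unfolding e1 e2 by (simp add: add_divide_distrib)
  qed
  have "(\<lambda>n. (1/2) / real (Suc n) + (\<Sum>i\<in>{1..n}. x i) / real n * (real n / real (Suc n)))
        \<longlonglongrightarrow> 0 + \<mu> * 1"
    by (intro tendsto_intros assms LIMSEQ_n_over_Suc_n tendsto_divide_0[OF tendsto_const]
          filterlim_at_top_imp_at_infinity filterlim_compose[OF filterlim_real_sequentially]
          filterlim_Suc)
  hence "(\<lambda>n. (1/2 + (\<Sum>i\<in>{1..<Suc n}. x i)) / real (Suc n)) \<longlonglongrightarrow> \<mu>"
    unfolding eq by simp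
  thus ?thesis by (rule LIMSEQ_imp_Suc)
qed

lemma xhat_bounds:
  fixes x :: "nat \<Rightarrow> real"
  assumes "\<And>i. i \<ge> 1 \<Longrightarrow> x i \<in> {0..1}" "t \<ge> 1"
  shows "0 < (1/2 + (\<Sum>i\<in>{1..<t}. x i)) / real t \<and> (1/2 + (\<Sum>i\<in>{1..<t}. x i)) / real t < 1"
proof -
  have s0: "0 \<le> (\<Sum>i\<in>{1..<t}. x i)" using assms by (intro sum_nonneg) auto
  have "(\<Sum>i\<in>{1..<t}. x i) \<le> real (card {1..<t}) * 1"
    using assms by (intro sum_bounded_above) auto
  hence s1: "(\<Sum>i\<in>{1..<t}. x i) \<le> real t - 1" using assms by simp
  have tp: "real t > 0" using assms by simp
  show ?thesis using s0 s1 tp by (simp add: field_simps)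
qed

lemma psi_avg:
  fixes x :: "nat \<Rightarrow> real" and \<mu> u :: real
  assumes x01: "\<And>i. i \<ge> 1 \<Longrightarrow> x i \<in> {0..1}" and "0 < \<mu>" "\<mu> < 1"
    and lim1: "(\<lambda>n. (\<Sum>i\<in>{1..n}. x i) / real n) \<longlonglongrightarrow> \<mu>"
    and lim2: "(\<lambda>n. (\<Sum>i\<in>{1..n}. psiE \<bar>x i - \<mu>\<bar>) / real n) \<longlonglongrightarrow> u"
  shows "(\<lambda>n. (\<Sum>i\<in>{1..n}. psiE \<bar>x i - (1/2 + (\<Sum>j\<in>{1..<i}. x j)) / real i\<bar>) / real n)
           \<longlonglongrightarrow> u"
proof -
  define xh where "xh i = (1/2 + (\<Sum>j\<in>{1..<i}. x j)) / real i" for i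
  define d where "d i = psiE \<bar>x i - xh i\<bar> - psiE \<bar>x i - \<mu>\<bar>" for i
  define \<delta> where "\<delta> = min \<mu> (1 - \<mu>) / 2"
  have \<delta>: "\<delta> > 0" "2 * \<delta> \<le> \<mu>" "2 * \<delta> \<le> 1 - \<mu>" using assms by (auto simp: \<delta>_def)
  define c where "c = 1 - \<delta>"
  define K where "K = 1 / (1 - c) + 1"
  have xh: "xh \<longlonglongrightarrow> \<mu>" unfolding xh_def by (rule xhat_lim[OF lim1])
  have ev1: "eventually (\<lambda>i. dist (xh i) \<mu> < \<delta>) sequentially"
    using tendstoD[OF xh \<delta>(1)] .
  have ev2: "eventually (\<lambda>i. i \<ge> (1::nat)) sequentially" by (rule eventually_ge_at_top)
  have "eventually (\<lambda>i. norm (d i) \<le> K * \<bar>xh i - \<mu>\<bar>) sequentially"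
    using ev1 ev2
  proof eventually_elim
    case (elim i)
    have xi: "0 \<le> x i" "x i \<le> 1" using x01[OF elim(2)] by auto
    have h: "\<bar>xh i - \<mu>\<bar> < \<delta>" using elim(1) by (simp add: dist_real_def)
    have h': "\<mu> - \<delta> < xh i" "xh i < \<mu> + \<delta>" using h by (auto simp: abs_less_iff)
    have a1: "\<bar>x i - xh i\<bar> \<le> c" using xi h' \<delta> unfolding c_def abs_le_iff by linarith
    have a2: "\<bar>x i - \<mu>\<bar> \<le> c" using xi \<delta> unfolding c_def abs_le_iff by linarith
    have "c < 1" using \<delta> by (simp add: c_def)
    have "\<bar>d i\<bar> \<le> K * \<bar>\<bar>x i - xh i\<bar> - \<bar>x i - \<mu>\<bar>\<bar>"
      unfolding d_def K_def by (rule psiE_lip) (use a1 a2 \<open>c < 1\<close> in auto)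
    also have "\<dots> \<le> K * \<bar>xh i - \<mu>\<bar>"
    proof (rule mult_left_mono)
      show "\<bar>\<bar>x i - xh i\<bar> - \<bar>x i - \<mu>\<bar>\<bar> \<le> \<bar>xh i - \<mu>\<bar>" by (auto simp: abs_if)
      show "0 \<le> K" using \<open>c < 1\<close> by (simp add: K_def)
    qed
    finally show ?case by simp
  qed
  moreover have "(\<lambda>i. K * \<bar>xh i - \<mu>\<bar>) \<longlonglongrightarrow> 0"
  proof -
    have "(\<lambda>i. K * \<bar>xh i - \<mu>\<bar>) \<longlonglongrightarrow> K * \<bar>\<mu> - \<mu>\<bar>" by (intro tendsto_intros xh)
    thus ?thesis by simp
  qed
  ultimately have "d \<longlonglongrightarrow> 0" by (rule Lim_null_comparison)
  hence dc: "(\<lambda>n. (\<Sum>i\<in>{1..n}. d i) / real n) \<longlonglongrightarrow> 0" by (rule cesaro0)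
  have "(\<lambda>n. (\<Sum>i\<in>{1..n}. psiE \<bar>x i - \<mu>\<bar>) / real n + (\<Sum>i\<in>{1..n}. d i) / real n) \<longlonglongrightarrow> u + 0"
    by (intro tendsto_add lim2 dc)
  moreover have "(\<Sum>i\<in>{1..n}. psiE \<bar>x i - \<mu>\<bar>) / real n + (\<Sum>i\<in>{1..n}. d i) / real n
      = (\<Sum>i\<in>{1..n}. psiE \<bar>x i - xh i\<bar>) / real n" for n
    by (simp add: d_def sum.distrib sum_subtractf add_divide_distrib[symmetric])
  ultimately show ?thesis unfolding xh_def by simp
qed




lemma final_det:
  fixes U W A :: "nat \<Rightarrow> real" and u K \<alpha> :: real
  assumes Upos: "\<And>t. U t > 0" and lim: "(\<lambda>t. U t / real t) \<longlonglongrightarrow> u"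
    and u: "u > 0" and K: "K > 0" and a0: "0 < \<alpha>" and a1: "\<alpha> < 1"
    and Wdef: "\<And>t. W t = (2 / real t) * sqrt (U t * (ln (K / \<alpha> / (1 - exp (- U t / 4))) + 1/2 * ln (2 * U t)))"
    and Adef: "\<And>t. A t = sqrt (2 * u * ln (real t) / real t)"
  shows "((\<lambda>t. W t / A t) \<longlonglongrightarrow> 1) \<and>
       (\<exists>\<epsilon> :: nat \<Rightarrow> real.
          (\<forall>t\<ge>2. (W t / A t)\<^sup>2 = 2 * U t / (real t * u) * (ln (1/\<alpha>) / ln (real t) + 1/2 + \<epsilon> t)) \<and>
          \<epsilon> \<longlonglongrightarrow> 0)"
proof -
  define e where "e t = exp (- U t / 4)" for t
  define G where "G t = ln (K / \<alpha> / (1 - e t)) + 1/2 * ln (2 * U t)" for t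
  define L where "L t = ln (real t)" for t :: nat
  define H where "H t = ln K - ln (1 - e t) + 1/2 * ln (2 * (U t / real t))" for t
  define \<epsilon>' where "\<epsilon>' t = H t / L t" for t
  define R where "R t = W t / A t" for t
  define \<epsilon> where "\<epsilon> t = (R t)\<^sup>2 * (real t * u) / (2 * U t) - ln (1/\<alpha>) / L t - 1/2" for t
  have e01: "0 < e t" "e t < 1" for t using Upos[of t] by (auto simp: e_def)
  have Lat: "filterlim L at_top sequentially"
    unfolding L_def by (rule filterlim_compose[OF ln_at_top filterlim_real_sequentially])
  have Uat: "filterlim U at_top sequentially"
  proof -
    have "filterlim (\<lambda>t. U t / real t * real t) at_top sequentially"
      by (rule filterlim_tendsto_pos_mult_at_top[OF lim u filterlim_real_sequentially])
    moreover have ev: "eventually (\<lambda>t. U t / real t * real t = U t) sequentially"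
      using eventually_ge_at_top[of "1::nat"] by eventually_elim auto
    ultimately show ?thesis using filterlim_cong[OF refl refl ev] by simp
  qed
  have e0: "e \<longlonglongrightarrow> 0"
  proof -
    have "filterlim (\<lambda>t. (1/4) * U t) at_top sequentially"
      by (rule filterlim_tendsto_pos_mult_at_top[OF tendsto_const _ Uat]) simp
    hence "filterlim (\<lambda>t. - ((1/4) * U t)) at_bot sequentially"
      by (simp add: filterlim_uminus_at_top)
    hence "(\<lambda>t. exp (- ((1/4) * U t))) \<longlonglongrightarrow> 0"
      by (rule filterlim_compose[OF exp_at_bot])
    moreover have "e = (\<lambda>t. exp (- ((1/4) * U t)))" by (auto simp: e_def)
    ultimately show ?thesis by simp
  qed
  have Hlim: "H \<longlonglongrightarrow> ln K - ln (1 - 0) + 1/2 * ln (2 * u)"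
    unfolding H_def by (intro tendsto_intros e0 lim) (use u in auto)
  have \<epsilon>'0: "\<epsilon>' \<longlonglongrightarrow> 0"
    unfolding \<epsilon>'_def by (rule tendsto_divide_0[OF Hlim filterlim_at_top_imp_at_infinity[OF Lat]])
  have GH: "G t = ln (1/\<alpha>) + 1/2 * L t + H t" if "t \<ge> 2" for t
  proof -
    have tp: "real t > 0" using that by simp
    have "ln (K / \<alpha> / (1 - e t)) = ln K - ln \<alpha> - ln (1 - e t)"
      using K a0 e01[of t] by (simp add: ln_div ln_mult)
    moreover have "ln (2 * U t) = ln (2 * (U t / real t)) + ln (real t)"
      using Upos[of t] tp by (simp add: ln_mult ln_div)
    moreover have "ln (1/\<alpha>) = - ln \<alpha>" using a0 by (simp add: ln_div)
    ultimately show ?thesis unfolding G_def H_def L_def by (simp add: algebra_simps)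
  qed
  have Lpos: "L t > 0" if "t \<ge> 2" for t using that by (simp add: L_def)
  have evG: "eventually (\<lambda>t. t \<ge> 2 \<and> G t > 0) sequentially"
  proof -
    have "eventually (\<lambda>t. dist (\<epsilon>' t) 0 < 1/2) sequentially"
      by (rule tendstoD[OF \<epsilon>'0]) simp
    thus ?thesis using eventually_ge_at_top[of "2::nat"]
    proof eventually_elim
      case (elim t)
      have "\<bar>H t / L t\<bar> < 1/2" using elim(1) by (simp add: \<epsilon>'_def dist_real_def)
      hence "\<bar>H t\<bar> < 1/2 * L t" using Lpos[OF elim(2)] by (simp add: abs_div field_simps)
      moreover have "ln (1/\<alpha>) > 0" using a0 a1 by simp
      ultimately show ?case using GH[OF elim(2)] elim(2) by auto
    qed
  qed
  have Apos: "A t > 0" if "t \<ge> 2" for t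
    using Lpos[OF that] u that unfolding Adef L_def by simp
  have R2: "(R t)\<^sup>2 = 2 * U t * G t / (real t * u * L t)" if "t \<ge> 2" "G t > 0" for t
  proof -
    have tp: "real t > 0" using that by simp
    have W2: "(W t)\<^sup>2 = 4 / (real t)\<^sup>2 * (U t * G t)"
      unfolding Wdef G_def[symmetric] e_def[symmetric]
      using Upos[of t] that(2) by (simp add: power_divide power_mult_distrib less_imp_le)
    have A2: "(A t)\<^sup>2 = 2 * u * L t / real t"
      unfolding Adef L_def using Lpos[OF that(1)] u tp by (simp add: L_def)
    show ?thesis unfolding R_def power_divide W2 A2 using tp u Lpos[OF that(1)]
      by (simp add: field_simps power2_eq_square)
  qed
  have ev\<epsilon>: "eventually (\<lambda>t. \<epsilon> t = \<epsilon>' t) sequentially"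
    using evG
  proof eventually_elim
    case (elim t)
    have tp: "real t > 0" using elim by simp
    have t2: "t \<ge> 2" and Gp: "G t > 0" using elim by auto
    have "\<epsilon> t = G t / L t - ln (1/\<alpha>) / L t - 1/2"
      unfolding \<epsilon>_def R2[OF t2 Gp] using tp u Upos[of t] Lpos[OF t2]
      by (simp add: field_simps)
    also have "\<dots> = \<epsilon>' t" unfolding \<epsilon>'_def GH[OF t2] using Lpos[OF t2]
      by (simp add: field_simps)
    finally show ?case .
  qed
  have \<epsilon>0: "\<epsilon> \<longlonglongrightarrow> 0"
    by (rule Lim_transform_eventually[OF \<epsilon>'0]) (use ev\<epsilon> in \<open>simp add: eventually_mono eq_commute\<close>)
  have ident: "(R t)\<^sup>2 = 2 * U t / (real t * u) * (ln (1/\<alpha>) / L t + 1/2 + \<epsilon> t)" if "t \<ge> 2" for t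
  proof -
    have tp: "real t > 0" using that by simp
    show ?thesis unfolding \<epsilon>_def using tp u Upos[of t] by (simp add: field_simps)
  qed
  have R2lim: "(\<lambda>t. (R t)\<^sup>2) \<longlonglongrightarrow> 1"
  proof -
    have "(\<lambda>t. 2 * (U t / real t) / u * (ln (1/\<alpha>) / L t + 1/2 + \<epsilon> t)) \<longlonglongrightarrow> 2 * u / u * (0 + 1/2 + 0)"
      by (intro tendsto_intros lim \<epsilon>0 tendsto_divide_0[OF tendsto_const]
          filterlim_at_top_imp_at_infinity[OF Lat]) (use u in auto)
    moreover have "eventually (\<lambda>t. 2 * (U t / real t) / u * (ln (1/\<alpha>) / L t + 1/2 + \<epsilon> t) = (R t)\<^sup>2) sequentially"
      using eventually_ge_at_top[of "2::nat"] by eventually_elim (simp add: ident)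
    ultimately show ?thesis using u by (simp add: Lim_transform_eventually)
  qed
  have Rlim: "R \<longlonglongrightarrow> 1"
  proof -
    have "(\<lambda>t. sqrt ((R t)\<^sup>2)) \<longlonglongrightarrow> sqrt 1" by (intro tendsto_intros R2lim)
    moreover have "eventually (\<lambda>t. sqrt ((R t)\<^sup>2) = R t) sequentially"
      using evG
    proof eventually_elim
      case (elim t)
      have "W t \<ge> 0" unfolding Wdef G_def[symmetric] e_def[symmetric]
        using Upos[of t] elim by simp
      hence "R t \<ge> 0" unfolding R_def using Apos[OF conjunct1[OF elim]] by simp
      thus ?case by simp
    qed
    ultimately show ?thesis by (simp add: Lim_transform_eventually)
  qed
  show ?thesis
    using Rlim ident \<epsilon>0 unfolding R_def L_def by blast
qed




lemma (in prob_space) slln_bounded: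
  fixes X :: "nat \<Rightarrow> 'a \<Rightarrow> real" and g :: "real \<Rightarrow> real" and a b :: real
  assumes meas: "\<And>t. t \<ge> 1 \<Longrightarrow> X t \<in> borel_measurable M"
    and indep: "indep_vars (\<lambda>_. borel) X {1..}"
    and dis: "\<And>t. t \<ge> 1 \<Longrightarrow> distr M borel (X t) = distr M borel (X 1)"
    and g[measurable]: "g \<in> borel_measurable borel"
    and bnd: "AE \<omega> in M. g (X 1 \<omega>) \<in> {a..b}" and ab: "a < b"
  shows "AE \<omega> in M. (\<lambda>n. (\<Sum>i\<in>{1..n}. g (X i \<omega>)) / real n) \<longlonglongrightarrow> expectation (\<lambda>\<omega>. g (X 1 \<omega>))"
proof -
  define m where "m = expectation (\<lambda>\<omega>. g (X 1 \<omega>))"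
  have X1[measurable]: "X 1 \<in> borel_measurable M" using meas by simp
  have hoeff: "prob {\<omega>\<in>space M. \<bar>(\<Sum>i\<in>{1..n}. g (X i \<omega>)) / real n - m\<bar> \<ge> \<epsilon>}
      \<le> 2 * exp (-2 * real n * \<epsilon>\<^sup>2 / (b - a)\<^sup>2)" if n: "n \<ge> 1" and \<epsilon>: "\<epsilon> \<ge> 0" for n \<epsilon>
  proof -
    interpret H: Hoeffding_ineq_iid M "{1..n}" "\<lambda>i \<omega>. g (X i \<omega>)" "\<lambda>\<omega>. g (X 1 \<omega>)" a b m
    proof unfold_locales
      show "finite {1..n}" by simp
      show "indep_vars (\<lambda>_. borel) (\<lambda>i \<omega>. g (X i \<omega>)) {1..n}"
        by (rule indep_vars_compose2[OF indep_vars_subset[OF indep]]) auto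
      show "random_variable borel (\<lambda>\<omega>. g (X 1 \<omega>))" by measurable
      show "AE x in M. g (X 1 x) \<in> {a..b}" by (rule bnd)
      show "m \<equiv> expectation (\<lambda>\<omega>. g (X 1 \<omega>))" by (simp add: m_def)
      fix i assume i: "i \<in> {1..n}"
      have mi[measurable]: "X i \<in> borel_measurable M" using meas i by auto
      have e: "distr M borel (X i) = distr M borel (X 1)" by (rule dis) (use i in simp)
      have e1: "distr M borel (\<lambda>\<omega>. g (X i \<omega>)) = distr (distr M borel (X i)) borel g"
        using distr_distr[of g borel borel "X i" M] mi g by (simp add: o_def)
      have e2: "distr (distr M borel (X 1)) borel g = distr M borel (\<lambda>\<omega>. g (X 1 \<omega>))"
        using distr_distr[of g borel borel "X 1" M] X1 g by (simp add: o_def)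
      show "distr M borel (\<lambda>\<omega>. g (X i \<omega>)) = distr M borel (\<lambda>\<omega>. g (X 1 \<omega>))"
        unfolding e1 e e2 ..
    qed
    have "{1..n} \<noteq> {}" using n by simp
    from H.Hoeffding_ineq_abs_ge'[OF \<epsilon> ab this] show ?thesis using n by simp
  qed
  have ev: "AE \<omega> in M. eventually (\<lambda>n. \<bar>(\<Sum>i\<in>{1..n}. g (X i \<omega>)) / real n - m\<bar> < 1 / real (Suc k)) sequentially"
    for k :: nat
  proof -
    define \<epsilon> :: real where "\<epsilon> = 1 / real (Suc k)"
    have \<epsilon>: "\<epsilon> > 0" by (simp add: \<epsilon>_def)
    define A where "A n = {\<omega>\<in>space M. \<bar>(\<Sum>i\<in>{1..n}. g (X i \<omega>)) / real n - m\<bar> \<ge> \<epsilon>}" for n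
    have Am: "A n \<in> sets M" for n
    proof -
      have "(\<lambda>\<omega>. (\<Sum>i\<in>{1..n}. g (X i \<omega>))) \<in> borel_measurable M"
        by (intro borel_measurable_sum) (use meas in auto)
      thus ?thesis unfolding A_def by measurable
    qed
    define q where "q = exp (-2 * \<epsilon>\<^sup>2 / (b - a)\<^sup>2)"
    have q: "0 < q" "q < 1" using \<epsilon> ab by (auto simp: q_def)
    have sq: "summable (\<lambda>n. 2 * q ^ n)" using q by (intro summable_mult summable_geometric) auto
    have "summable (\<lambda>n. measure M (A n))"
    proof (rule summable_comparison_test'[OF sq])
      fix n :: nat assume "n \<ge> 1"
      have "norm (measure M (A n)) = prob (A n)" by simp
      also have "\<dots> \<le> 2 * exp (-2 * real n * \<epsilon>\<^sup>2 / (b - a)\<^sup>2)"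
        unfolding A_def by (rule hoeff) (use \<open>n \<ge> 1\<close> \<epsilon> in auto)
      also have "exp (-2 * real n * \<epsilon>\<^sup>2 / (b - a)\<^sup>2) = q ^ n"
        unfolding q_def by (subst exp_of_nat_mult[symmetric]) (simp add: field_simps)
      finally show "norm (measure M (A n)) \<le> 2 * q ^ n" .
    qed
    hence "AE \<omega> in M. eventually (\<lambda>n. \<omega> \<in> space M - A n) sequentially"
      by (intro borel_cantelli_AE1 Am) (auto simp: emeasure_eq_measure)
    thus ?thesis
      by (rule AE_mp) (auto intro!: AE_I2 elim!: eventually_mono simp: A_def \<epsilon>_def not_le)
  qed
  have "AE \<omega> in M. \<forall>k. eventually (\<lambda>n. \<bar>(\<Sum>i\<in>{1..n}. g (X i \<omega>)) / real n - m\<bar> < 1 / real (Suc k)) sequentially"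
    using ev by (subst AE_all_countable) auto
  thus ?thesis
  proof (rule AE_mp, intro AE_I2 impI)
    fix \<omega> assume all: "\<forall>k. eventually (\<lambda>n. \<bar>(\<Sum>i\<in>{1..n}. g (X i \<omega>)) / real n - m\<bar> < 1 / real (Suc k)) sequentially"
    show "(\<lambda>n. (\<Sum>i\<in>{1..n}. g (X i \<omega>)) / real n) \<longlonglongrightarrow> expectation (\<lambda>\<omega>. g (X 1 \<omega>))"
      unfolding m_def[symmetric]
    proof (rule tendstoI)
      fix r :: real assume r: "r > 0"
      obtain k where k: "inverse (real (Suc k)) < r"
        using reals_Archimedean[OF r] by auto
      show "eventually (\<lambda>n. dist ((\<Sum>i\<in>{1..n}. g (X i \<omega>)) / real n) m < r) sequentially"
        using all[rule_format, of k]
      proof (rule eventually_mono)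
        fix n assume "\<bar>(\<Sum>i\<in>{1..n}. g (X i \<omega>)) / real n - m\<bar> < 1 / real (Suc k)"
        thus "dist ((\<Sum>i\<in>{1..n}. g (X i \<omega>)) / real n) m < r"
          using k unfolding dist_real_def inverse_eq_divide by linarith
      qed
    qed
  qed
qed

lemma Zk_pos: assumes "\<kappa> > 0" shows "Zk \<kappa> > 0"
proof -
  define N where "N = density lborel (\<lambda>x. ennreal (std_normal_density x))"
  interpret N: prob_space N unfolding N_def by (rule prob_space_normal_density) simp
  define b where "b = 1 / \<kappa>"
  have b: "b > 0" using assms by (simp add: b_def)
  have sN: "sets N = sets borel" by (simp add: N_def)
  have diff: "{..b} - {..-b} = {-b<..b}" by auto
  have "Phi b - Phi (-b) = measure N {..b} - measure N {..-b}"
    by (simp add: Phi_def N_def)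
  also have "\<dots> = measure N ({..b} - {..-b})"
    by (rule N.finite_measure_Diff[symmetric]) (use sN b in auto)
  also have "\<dots> = measure N {-b<..b}" by (simp add: diff)
  finally have eq: "Phi b - Phi (-b) = measure N {-b<..b}" .
  define c where "c = std_normal_density b"
  have c: "c > 0" by (simp add: c_def normal_density_pos)
  have le: "c \<le> std_normal_density x" if "x \<in> {-b<..b}" for x
  proof -
    have "x\<^sup>2 \<le> b\<^sup>2" using that b by (intro power2_le_iff_abs_le[THEN iffD2]) auto
    thus ?thesis unfolding c_def normal_density_def by (simp add: divide_right_mono)
  qed
  have "ennreal (c * (2 * b)) = (\<integral>\<^sup>+x. ennreal c * indicator {-b<..b} x \<partial>lborel)"
    using c b by (simp add: nn_integral_cmult ennreal_mult)
  also have "\<dots> \<le> (\<integral>\<^sup>+x. ennreal (std_normal_density x) * indicator {-b<..b} x \<partial>lborel)"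
    by (intro nn_integral_mono) (auto simp: le split: split_indicator)
  also have "\<dots> = emeasure N {-b<..b}"
    unfolding N_def by (subst emeasure_density) auto
  also have "\<dots> = ennreal (measure N {-b<..b})" by (simp add: N.emeasure_eq_measure)
  finally have "c * (2 * b) \<le> measure N {-b<..b}"
    by (subst (asm) ennreal_le_iff) auto
  moreover have "c * (2 * b) > 0" using c b by simp
  ultimately have "measure N {-b<..b} > 0" by linarith
  thus ?thesis unfolding Zk_def b_def[symmetric] using eq by (simp add: b_def)
qed




lemma psiE_meas[measurable]: "psiE \<in> borel_measurable borel"
  unfolding psiE_def[abs_def] by measurable

theorem mainTheorem5:
  fixes M :: "'a measure" and P :: "real measure" and X :: "nat \<Rightarrow> 'a \<Rightarrow> real"
    and \<kappa> \<alpha> \<mu> u :: real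
  assumes "prob_space M"
    and "prob_space P" and "sets P = sets borel"
    and "AE x in P. x \<in> {0..1}"
    and "\<And>c. measure P {c} < 1"
    and "\<And>t. t \<ge> 1 \<Longrightarrow> X t \<in> borel_measurable M"
    and "prob_space.indep_vars M (\<lambda>_. borel) X {1..}"
    and "\<And>t. t \<ge> 1 \<Longrightarrow> distr M borel (X t) = P"
    and "\<mu> = (\<integral>x. x \<partial>P)"
    and "\<kappa> > 0" and "0 < \<alpha>" and "\<alpha> < 1"
    and "u = (\<integral>x. psiE \<bar>x - \<mu>\<bar> \<partial>P)"
  shows "0 < u \<and>
    (AE \<omega> in M.
       ((\<lambda>t. Wapx \<kappa> \<alpha> X t \<omega> / Aapx u t) \<longlonglongrightarrow> 1) \<and>
       (\<exists>\<epsilon> :: nat \<Rightarrow> real.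
          (\<forall>t\<ge>2. (Wapx \<kappa> \<alpha> X t \<omega> / Aapx u t)\<^sup>2 =
             2 * Ut \<kappa> X t \<omega> / (real t * u) *
               (ln (1/\<alpha>) / ln (real t) + 1/2 + \<epsilon> t)) \<and>
          \<epsilon> \<longlonglongrightarrow> 0))"
proof -
  interpret M: prob_space M by fact
  interpret Pp: prob_space P by fact
  note sP = assms(3)
  have measP: "f \<in> borel_measurable P" if "f \<in> borel_measurable borel" for f :: "real \<Rightarrow> real"
    unfolding measurable_cong_sets[OF sP refl] by (rule that)
  have intg: "integrable P f" if "f \<in> borel_measurable borel" "AE x in P. \<bar>f x\<bar> \<le> B" for f :: "real \<Rightarrow> real" and B :: real
    by (rule Pp.integrable_const_bound[of f B]) (use that in simp, rule measP[OF that(1)])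
  have AE01: "AE x in P. x \<in> {0..1}" by fact
  have sets1: "A \<in> sets P" if "A \<in> sets borel" for A using that sP by simp
  have iid: "integrable P (\<lambda>x. x)"
    by (rule intg[of _ 1]) (auto intro: AE_mp[OF AE01])
  have \<mu>0: "0 \<le> \<mu>" unfolding assms(9) by (rule integral_nonneg_AE) (auto intro: AE_mp[OF AE01])
  have \<mu>1: "\<mu> \<le> 1"
  proof -
    have "\<mu> \<le> (\<integral>x. 1 \<partial>P)" unfolding assms(9)
      by (rule integral_mono_AE[OF iid]) (auto intro: AE_mp[OF AE01])
    thus ?thesis by (simp add: Pp.prob_space)
  qed
  have \<mu>ne0: "\<mu> \<noteq> 0"
  proof
    assume "\<mu> = 0"
    moreover have nn: "AE x in P. 0 \<le> x" using AE01 by eventually_elim auto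
    ultimately have "AE x in P. x = 0" using integral_nonneg_eq_0_iff_AE[OF iid nn] assms(9)
      by simp
    hence "AE x in P. x \<in> {0}" by simp
    hence "measure P {0} = 1" using Pp.prob_eq_1[of "{0}"] sets1 by simp
    thus False using assms(5)[of 0] by simp
  qed
  have \<mu>ne1: "\<mu> \<noteq> 1"
  proof
    assume h: "\<mu> = 1"
    have i1: "integrable P (\<lambda>x. 1 - x)" using iid by simp
    have "(\<integral>x. 1 - x \<partial>P) = 1 - \<mu>" unfolding assms(9) using iid
      by (subst Bochner_Integration.integral_diff) (auto simp: Pp.prob_space)
    hence "(\<integral>x. 1 - x \<partial>P) = 0" using h by simp
    moreover have nn: "AE x in P. 0 \<le> 1 - x" using AE01 by eventually_elim auto
    ultimately have "AE x in P. 1 - x = 0" using integral_nonneg_eq_0_iff_AE[OF i1 nn]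
      by simp
    hence "AE x in P. x \<in> {1}" by eventually_elim auto
    hence "measure P {1} = 1" using Pp.prob_eq_1[of "{1}"] sets1 by simp
    thus False using assms(5)[of 1] by simp
  qed
  have \<mu>pos: "0 < \<mu>" "\<mu> < 1" using \<mu>0 \<mu>1 \<mu>ne0 \<mu>ne1 by auto
  define c0 where "c0 = max \<mu> (1 - \<mu>)"
  have c0: "c0 < 1" using \<mu>pos by (simp add: c0_def)
  define g where "g x = psiE \<bar>x - \<mu>\<bar>" for x
  have gm[measurable]: "g \<in> borel_measurable borel" unfolding g_def[abs_def] by measurable
  have gb: "0 \<le> g x \<and> g x \<le> 1 / (1 - c0)" if "x \<in> {0..1}" for x
  proof -
    have "\<bar>x - \<mu>\<bar> \<le> c0" using that \<mu>pos by (auto simp: c0_def abs_le_iff)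
    thus ?thesis unfolding g_def using c0 by (auto intro!: psiE_nonneg psiE_upper)
  qed
  have ig: "integrable P g"
    by (rule intg[of _ "1 / (1 - c0)"]) (use AE01 in \<open>simp, eventually_elim, use gb in force\<close>)
  have u0: "0 \<le> u" unfolding assms(13) g_def[symmetric]
    by (rule integral_nonneg_AE) (use AE01 in \<open>eventually_elim, use gb in force\<close>)
  have upos: "0 < u"
  proof (rule ccontr)
    assume "\<not> 0 < u"
    hence "u = 0" using u0 by simp
    moreover have nn: "AE x in P. 0 \<le> g x" using AE01 by eventually_elim (use gb in force)
    ultimately have "AE x in P. g x = 0" using integral_nonneg_eq_0_iff_AE[OF ig nn] assms(13)
      unfolding g_def[symmetric] by simp
    hence "AE x in P. x \<in> {\<mu>}"
    proof (rule AE_mp[OF AE_conjI[OF AE01]], intro AE_I2 impI)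
      fix x assume h: "x \<in> {0..1} \<and> g x = 0"
      show "x \<in> {\<mu>}"
      proof (rule ccontr)
        assume "x \<notin> {\<mu>}"
        hence "0 < \<bar>x - \<mu>\<bar>" by simp
        moreover have "\<bar>x - \<mu>\<bar> \<le> c0" using h \<mu>pos by (auto simp: c0_def abs_le_iff)
        ultimately have "0 < g x" unfolding g_def using c0 by (intro psiE_pos) auto
        thus False using h by simp
      qed
    qed
    hence "measure P {\<mu>} = 1" using Pp.prob_eq_1[of "{\<mu>}"] sets1 by simp
    thus False using assms(5)[of \<mu>] by simp
  qed
  have Xm[measurable]: "X t \<in> borel_measurable M" if "t \<ge> 1" for t using assms(6) that by simp
  have X1m[measurable]: "X 1 \<in> borel_measurable M" using assms(6) by simp
  have dis1: "distr M borel (X t) = distr M borel (X 1)" if "t \<ge> 1" for t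
    using assms(8)[OF that] assms(8)[of 1] by simp
  have AEX: "AE \<omega> in M. X t \<omega> \<in> {0..1}" if "t \<ge> 1" for t
  proof -
    have "AE x in distr M borel (X t). x \<in> {0..1}" unfolding assms(8)[OF that] by (rule AE01)
    thus ?thesis by (subst (asm) AE_distr_iff) (use that in auto)
  qed
  have AEall: "AE \<omega> in M. \<forall>t. t \<ge> 1 \<longrightarrow> X t \<omega> \<in> {0..1}"
    unfolding AE_all_countable by (intro allI AE_impI AEX)
  have E1: "M.expectation (\<lambda>\<omega>. X 1 \<omega>) = \<mu>"
  proof -
    have "integral\<^sup>L (distr M borel (X 1)) (\<lambda>x. x) = M.expectation (\<lambda>\<omega>. X 1 \<omega>)"
      using integral_distr[of "X 1" M borel "\<lambda>x. x", OF X1m] by simp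
    thus ?thesis unfolding assms(8)[OF order_refl] assms(9) by simp
  qed
  have E2: "M.expectation (\<lambda>\<omega>. g (X 1 \<omega>)) = u"
  proof -
    have "integral\<^sup>L (distr M borel (X 1)) g = M.expectation (\<lambda>\<omega>. g (X 1 \<omega>))"
      by (rule integral_distr) (rule X1m, rule gm)
    thus ?thesis unfolding assms(8)[OF order_refl] assms(13) g_def by simp
  qed
  have slln1: "AE \<omega> in M. (\<lambda>n. (\<Sum>i\<in>{1..n}. X i \<omega>) / real n) \<longlonglongrightarrow> \<mu>"
    using M.slln_bounded[of X "\<lambda>x. x" 0 1, OF Xm assms(7) dis1] E1 AEX[of 1] by simp
  have slln2: "AE \<omega> in M. (\<lambda>n. (\<Sum>i\<in>{1..n}. g (X i \<omega>)) / real n) \<longlonglongrightarrow> u"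
  proof -
    have "AE \<omega> in M. g (X 1 \<omega>) \<in> {-1..1 / (1 - c0)}"
      using AEX[OF order_refl] by eventually_elim (use gb in force)
    thus ?thesis using M.slln_bounded[of X g "-1" "1 / (1 - c0)", OF Xm assms(7) dis1 gm] E2 c0
      by (simp add: field_simps)
  qed
  have ZK: "\<kappa> * Zk \<kappa> > 0" using Zk_pos[OF assms(10)] assms(10) by simp
  have "AE \<omega> in M.
       ((\<lambda>t. Wapx \<kappa> \<alpha> X t \<omega> / Aapx u t) \<longlonglongrightarrow> 1) \<and>
       (\<exists>\<epsilon> :: nat \<Rightarrow> real.
          (\<forall>t\<ge>2. (Wapx \<kappa> \<alpha> X t \<omega> / Aapx u t)\<^sup>2 =
             2 * Ut \<kappa> X t \<omega> / (real t * u) *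
               (ln (1/\<alpha>) / ln (real t) + 1/2 + \<epsilon> t)) \<and>
          \<epsilon> \<longlonglongrightarrow> 0)"
  proof (rule AE_mp[OF AE_conjI[OF AEall AE_conjI[OF slln1 slln2]]], intro AE_I2 impI)
    fix \<omega> assume h: "(\<forall>t. t \<ge> 1 \<longrightarrow> X t \<omega> \<in> {0..1}) \<and>
      (\<lambda>n. (\<Sum>i\<in>{1..n}. X i \<omega>) / real n) \<longlonglongrightarrow> \<mu> \<and>
      (\<lambda>n. (\<Sum>i\<in>{1..n}. g (X i \<omega>)) / real n) \<longlonglongrightarrow> u"
    define x where "x i = X i \<omega>" for i
    have x01: "\<And>i. i \<ge> 1 \<Longrightarrow> x i \<in> {0..1}" using h by (auto simp: x_def)
    have l1: "(\<lambda>n. (\<Sum>i\<in>{1..n}. x i) / real n) \<longlonglongrightarrow> \<mu>" using h by (simp add: x_def)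
    have l2: "(\<lambda>n. (\<Sum>i\<in>{1..n}. psiE \<bar>x i - \<mu>\<bar>) / real n) \<longlonglongrightarrow> u"
      using h by (simp add: x_def g_def)
    have pa: "(\<lambda>n. (\<Sum>i\<in>{1..n}. psiE \<bar>x i - (1/2 + (\<Sum>j\<in>{1..<i}. x j)) / real i\<bar>) / real n)
           \<longlonglongrightarrow> u" by (rule psi_avg[OF x01 \<mu>pos l1 l2])
    define U where "U t = Ut \<kappa> X t \<omega>" for t
    have Ueq: "U t = 1 / (2 * \<kappa>^2) + (\<Sum>i\<in>{1..t}. psiE \<bar>x i - (1/2 + (\<Sum>j\<in>{1..<i}. x j)) / real i\<bar>)" for t
      by (simp add: U_def Ut_def Xhat_def x_def)
    have Upos: "U t > 0" for t
    proof -
      have "0 \<le> (\<Sum>i\<in>{1..t}. psiE \<bar>x i - (1/2 + (\<Sum>j\<in>{1..<i}. x j)) / real i\<bar>)"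
      proof (intro sum_nonneg psiE_nonneg)
        fix i assume i: "i \<in> {1..t}"
        define xh where "xh = (1/2 + (\<Sum>j\<in>{1..<i}. x j)) / real i"
        have "0 < xh \<and> xh < 1" unfolding xh_def
          by (rule xhat_bounds[OF x01]) (use i in auto)
        moreover have "0 \<le> x i" "x i \<le> 1" using x01[of i] i by auto
        ultimately have "\<bar>x i - xh\<bar> < 1" unfolding abs_less_iff by linarith
        thus "\<bar>x i - (1/2 + (\<Sum>j\<in>{1..<i}. x j)) / real i\<bar> < 1" by (simp add: xh_def)
      qed simp
      moreover have "1 / (2 * \<kappa>^2) > 0" using assms(10) by simp
      ultimately show ?thesis unfolding Ueq by linarith
    qed
    have Ulim: "(\<lambda>t. U t / real t) \<longlonglongrightarrow> u"
    proof -
      have "(\<lambda>t. (1 / (2 * \<kappa>^2)) / real t + (\<Sum>i\<in>{1..t}. psiE \<bar>x i - (1/2 + (\<Sum>j\<in>{1..<i}. x j)) / real i\<bar>) / real t) \<longlonglongrightarrow> 0 + u"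
        by (intro tendsto_add pa tendsto_divide_0[OF tendsto_const]
              filterlim_at_top_imp_at_infinity filterlim_real_sequentially)
      thus ?thesis unfolding Ueq by (simp add: add_divide_distrib)
    qed
    show "((\<lambda>t. Wapx \<kappa> \<alpha> X t \<omega> / Aapx u t) \<longlonglongrightarrow> 1) \<and>
       (\<exists>\<epsilon> :: nat \<Rightarrow> real.
          (\<forall>t\<ge>2. (Wapx \<kappa> \<alpha> X t \<omega> / Aapx u t)\<^sup>2 =
             2 * Ut \<kappa> X t \<omega> / (real t * u) *
               (ln (1/\<alpha>) / ln (real t) + 1/2 + \<epsilon> t)) \<and>
          \<epsilon> \<longlonglongrightarrow> 0)"
      using final_det[OF Upos Ulim upos ZK assms(11) assms(12), of "\<lambda>t. Wapx \<kappa> \<alpha> X t \<omega>" "\<lambda>t. Aapx u t"]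
      unfolding U_def by (simp add: Wapx_def ell_def Aapx_def)
  qed
  with upos show ?thesis by simp
qed

end
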